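(* Let $n\ge 3$ and let $\mathcal{P}=(V_0,\dots,V_{n-1})$ be an $n$-gon. Then $\mathcal{P}$ is strictly convex if and only if $\mathcal{P}$ is c-strictly monotone, i.e. if and only if $\mathcal{P}$ is locally-ordinary and, writing $(\alpha_0,\dots,\alpha_{n-1})=\arg\mathcal{P}$, there is $k\in\{0,\dots,n-1\}$ with either $\alpha_k<\dots<\alpha_{n-1}<\alpha_0<\dots<\alpha_{k-1}$ or $\alpha_k>\dots>\alpha_{n-1}>\alpha_0>\dots>\alpha_{k-1}$ (for $k=0$ these chains read $\alpha_0<\dots<\alpha_{n-1}$, resp. $\alpha_0>\dots>\alpha_{n-1}$).
   Context: A polygon (or $n$-gon) is any finite sequence $\mathcal{P}=(V_0,\dots,V_{n-1})$ of points of $\mathbb{R}^2$; indices are taken cyclically, $V_n:=V_0$. Its edges are the segments $[V_i,V_{i+1}]=\operatorname{conv}\{V_i,V_{i+1}\}$, $i\in\{0,\dots,n-1\}$, and $\operatorname{conv}\mathcal{P}:=\operatorname{conv}\{V_0,\dots,V_{n-1}\}$. $\mathcal{P}$ is convex if $\bigcup_{i=0}^{n-1}[V_i,V_{i+1}]=\partial\operatorname{conv}\mathcal{P}$. $\mathcal{P}$ is strict if for any three distinct indices $i,j,k$ the points $V_i,V_j,V_k$ are non-collinear; strictly convex means strict and convex. $\mathcal{P}$ is locally-ordinary if $V_i\ne V_{i+1}$ for all $i\in\{0,\dots,n-1\}$. For a nonzero vector $\vec v=(x,y)$ with $r=\sqrt{x^2+y^2}$, $\arg\vec v$ is the unique $\psi\in[0,2\pi)$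 with $x=r\cos\psi$, $y=r\sin\psi$. For a locally-ordinary polygon, $\arg\mathcal{P}:=(\arg(V_1-V_0),\dots,\arg(V_n-V_{n-1}))$. The notions c-increasing / c-decreasing / c-strictly monotone are defined only for locally-ordinary polygons, as in the claim. *)

theory Defs
  imports "HOL-Analysis.Analysis"
begin

text \<open>An n-gon is given by a map V :: nat => real \<times> real, of which only the
values V 0, ..., V (n-1) matter; indices are taken cyclically.\<close>

definition vtx :: "nat \<Rightarrow> (nat \<Rightarrow> real \<times> real) \<Rightarrow> nat \<Rightarrow> real \<times> real" where
  "vtx n V i = V (i mod n)"

definition poly_conv :: "nat \<Rightarrow> (nat \<Rightarrow> real \<times> real) \<Rightarrow> (real \<times> real) set" where
  "poly_conv n V = convex hull (V ` {..<n})"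

definition poly_convex :: "nat \<Rightarrow> (nat \<Rightarrow> real \<times> real) \<Rightarrow> bool" where
  "poly_convex n V \<longleftrightarrow>
     (\<Union>i<n. closed_segment (vtx n V i) (vtx n V (Suc i))) = frontier (poly_conv n V)"

definition poly_strict :: "nat \<Rightarrow> (nat \<Rightarrow> real \<times> real) \<Rightarrow> bool" where
  "poly_strict n V \<longleftrightarrow>
     (\<forall>i<n. \<forall>j<n. \<forall>k<n. i \<noteq> j \<and> i \<noteq> k \<and> j \<noteq> k \<longrightarrow> \<not> collinear {V i, V j, V k})"

definition strictly_convex_poly :: "nat \<Rightarrow> (nat \<Rightarrow> real \<times> real) \<Rightarrow> bool" where
  "strictly_convex_poly n V \<longleftrightarrow> poly_strict n V \<and> poly_convex n V"

definition locally_ordinary :: "nat \<Rightarrow> (nat \<Rightarrow> real \<times> real) \<Rightarrow> bool" where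
  "locally_ordinary n V \<longleftrightarrow> (\<forall>i<n. vtx n V i \<noteq> vtx n V (Suc i))"

definition vec_arg :: "real \<times> real \<Rightarrow> real" where
  "vec_arg v = (THE \<psi>. 0 \<le> \<psi> \<and> \<psi> < 2 * pi \<and>
      fst v = sqrt ((fst v)\<^sup>2 + (snd v)\<^sup>2) * cos \<psi> \<and>
      snd v = sqrt ((fst v)\<^sup>2 + (snd v)\<^sup>2) * sin \<psi>)"

definition poly_arg :: "nat \<Rightarrow> (nat \<Rightarrow> real \<times> real) \<Rightarrow> nat \<Rightarrow> real" where
  "poly_arg n V i = vec_arg (vtx n V (Suc i) - vtx n V i)"

definition c_strictly_increasing :: "nat \<Rightarrow> (nat \<Rightarrow> real \<times> real) \<Rightarrow> bool" where
  "c_strictly_increasing n V \<longleftrightarrow> locally_ordinary n V \<and>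
     (\<exists>k<n. \<forall>j. Suc j < n \<longrightarrow>
        poly_arg n V ((k + j) mod n) < poly_arg n V ((k + Suc j) mod n))"

definition c_strictly_decreasing :: "nat \<Rightarrow> (nat \<Rightarrow> real \<times> real) \<Rightarrow> bool" where
  "c_strictly_decreasing n V \<longleftrightarrow> locally_ordinary n V \<and>
     (\<exists>k<n. \<forall>j. Suc j < n \<longrightarrow>
        poly_arg n V ((k + j) mod n) > poly_arg n V ((k + Suc j) mod n))"

definition c_strictly_monotone :: "nat \<Rightarrow> (nat \<Rightarrow> real \<times> real) \<Rightarrow> bool" where
  "c_strictly_monotone n V \<longleftrightarrow> c_strictly_increasing n V \<or> c_strictly_decreasing n V"

end

theory Submission
  imports Defs
begin


lemma vec_arg_prop:
  fixes v :: "real \<times> real"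
  assumes "v \<noteq> 0"
  shows "0 \<le> vec_arg v \<and> vec_arg v < 2 * pi \<and>
         v = (norm v * cos (vec_arg v), norm v * sin (vec_arg v))"
proof -
  obtain x y where v: "v = (x, y)" by (cases v)
  define z where "z = Complex x y"
  have z0: "z \<noteq> 0" using assms v z_def by (auto simp: complex_eq_iff zero_prod_def)
  have nz: "norm z = sqrt (x\<^sup>2 + y\<^sup>2)" by (simp add: z_def cmod_def)
  have nv: "norm v = sqrt (x\<^sup>2 + y\<^sup>2)" by (simp add: v norm_Pair)
  define t where "t = Arg2pi z"
  have t: "0 \<le> t" "t < 2 * pi" using Arg2pi[of z] t_def by auto
  have eq: "z = of_real (norm z) * exp (\<i> * of_real t)" using Arg2pi_eq[of z] t_def by simp
  have xe: "x = sqrt (x\<^sup>2 + y\<^sup>2) * cos t" and ye: "y = sqrt (x\<^sup>2 + y\<^sup>2) * sin t"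
  proof -
    have "Re z = norm z * cos t" "Im z = norm z * sin t"
      by (subst eq, simp add: Re_exp Im_exp)+
    then show "x = sqrt (x\<^sup>2 + y\<^sup>2) * cos t" "y = sqrt (x\<^sup>2 + y\<^sup>2) * sin t"
      unfolding nz[symmetric] by (simp_all add: z_def)
  qed
  have "vec_arg v = t"
    unfolding vec_arg_def v fst_conv snd_conv
  proof (rule the_equality)
    show "0 \<le> t \<and> t < 2 * pi \<and> x = sqrt (x\<^sup>2 + y\<^sup>2) * cos t \<and> y = sqrt (x\<^sup>2 + y\<^sup>2) * sin t"
      using t xe ye by auto
  next
    fix s assume s: "0 \<le> s \<and> s < 2 * pi \<and> x = sqrt (x\<^sup>2 + y\<^sup>2) * cos s \<and> y = sqrt (x\<^sup>2 + y\<^sup>2) * sin s"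
    have r: "0 < sqrt (x\<^sup>2 + y\<^sup>2)" using z0 nz by (metis zero_less_norm_iff)
    have "of_real (sqrt (x\<^sup>2 + y\<^sup>2)) * exp (\<i> * of_real s) = z"
      using s by (simp add: z_def complex_eq_iff Re_exp Im_exp)
    then have "Arg2pi z = s" using Arg2pi_unique r s by blast
    then show "s = t" using t_def by simp
  qed
  then show ?thesis using t xe ye v nv by simp
qed



definition cross :: "real \<times> real \<Rightarrow> real \<times> real \<Rightarrow> real" where
  "cross a b = fst a * snd b - snd a * fst b"

definition edg :: "nat \<Rightarrow> (nat \<Rightarrow> real \<times> real) \<Rightarrow> nat \<Rightarrow> real \<times> real" where
  "edg n V i = vtx n V (Suc i) - vtx n V i"

definition condC :: "nat \<Rightarrow> (nat \<Rightarrow> real \<times> real) \<Rightarrow> real \<Rightarrow> bool" where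
  "condC n V s \<longleftrightarrow> (\<forall>i j. j mod n \<noteq> i mod n \<and> j mod n \<noteq> Suc i mod n \<longrightarrow>
       s * cross (edg n V i) (vtx n V j - vtx n V i) > 0)"

lemma vtx_mod [simp]: "vtx n V (i mod n) = vtx n V i"
  by (simp add: vtx_def)

lemma vtx_cong: "i mod n = j mod n \<Longrightarrow> vtx n V i = vtx n V j"
  by (simp add: vtx_def)

lemma vtx_add_n [simp]: "vtx n V (i + n) = vtx n V i"
  by (simp add: vtx_def)

lemma vtx_lt: "i < n \<Longrightarrow> vtx n V i = V i"
  by (simp add: vtx_def)

lemma edg_mod [simp]: "edg n V (i mod n) = edg n V i"
  by (simp add: edg_def vtx_def mod_Suc_eq)

lemma mod_neq: "0 < d \<Longrightarrow> d < (n::nat) \<Longrightarrow> (b + d) mod n \<noteq> b mod n"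
  by (metis add_diff_cancel_left' dvd_imp_le le_add1 mod_eq_dvd_iff_nat not_less)

lemma cross_add [simp]: "cross a (b + c) = cross a b + cross a c"
  by (simp add: cross_def algebra_simps)
lemma cross_diff [simp]: "cross a (b - c) = cross a b - cross a c"
  by (simp add: cross_def algebra_simps)
lemma cross_minus [simp]: "cross a (- b) = - cross a b"
  by (simp add: cross_def algebra_simps)
lemma cross_minus1 [simp]: "cross (- a) b = - cross a b"
  by (simp add: cross_def algebra_simps)
lemma cross_scale [simp]: "cross a (c *\<^sub>R b) = c * cross a b"
  by (simp add: cross_def algebra_simps)
lemma cross_self [simp]: "cross a a = 0"
  by (simp add: cross_def algebra_simps)
lemma cross_zero [simp]: "cross 0 a = 0" "cross a 0 = 0"
  by (simp_all add: cross_def)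
lemma cross_sum: "cross a (sum f S) = (\<Sum>t\<in>S. cross a (f t))"
  by (induction S rule: infinite_finite_induct) auto
lemma cross_anti: "cross b a = - cross a b"
  by (simp add: cross_def algebra_simps)

lemma cross_ident: "cross p q *\<^sub>R u = cross u q *\<^sub>R p + cross p u *\<^sub>R q"
  by (cases p; cases q; cases u) (simp add: cross_def algebra_simps)

lemma inner_ident: "cross p q * inner a u = cross u q * inner a p + cross p u * inner a q"
proof -
  have "inner a (cross p q *\<^sub>R u) = inner a (cross u q *\<^sub>R p + cross p u *\<^sub>R q)"
    using cross_ident by metis
  then show ?thesis by (simp add: inner_add_right)
qed

lemma perp_zero:
  fixes a p q :: "real \<times> real"
  assumes "inner a p = 0" "inner a q = 0" "cross p q \<noteq> 0"
  shows "a = 0"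
proof -
  have "cross p q * inner a u = 0" for u using inner_ident[of p q a u] assms by simp
  then have "inner a u = 0" for u using assms(3) by simp
  then show ?thesis by (metis inner_eq_zero_iff)
qed



lemma edg_add_n [simp]: "edg n V (i + n) = edg n V i"
  unfolding edg_def vtx_def by (metis add_Suc mod_add_self2)

lemma vtx_Suc_edg: "vtx n V (Suc i) = vtx n V i + edg n V i"
  by (simp add: edg_def)

lemma C_turn:
  assumes C: "condC n V s" and n: "n \<ge> 3"
  shows "s * cross (edg n V i) (edg n V (Suc i)) > 0"
proof -
  have "Suc (Suc i) mod n \<noteq> i mod n" using mod_neq[of 2 n i] n by simp
  moreover have "Suc (Suc i) mod n \<noteq> Suc i mod n" using mod_neq[of 1 n "Suc i"] n by simp
  ultimately have "s * cross (edg n V i) (vtx n V (Suc (Suc i)) - vtx n V i) > 0"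
    using C unfolding condC_def by blast
  moreover have "vtx n V (Suc (Suc i)) - vtx n V i = edg n V i + edg n V (Suc i)"
    by (simp add: edg_def)
  ultimately show ?thesis by (simp add: distrib_left)
qed

lemma prev_facts:
  assumes n: "n \<ge> 3"
  shows "Suc (a + n - 1) = a + n" "vtx n V (Suc (a + n - 1)) = vtx n V a"
        "edg n V (Suc (a + n - 1)) = edg n V a" "(a + n - 1) mod n \<noteq> a mod n"
        "(a + n - 1) mod n \<noteq> Suc a mod n"
proof -
  show 1: "Suc (a + n - 1) = a + n" using n by simp
  show "vtx n V (Suc (a + n - 1)) = vtx n V a" unfolding 1 by simp
  show "edg n V (Suc (a + n - 1)) = edg n V a" unfolding 1 by simp
  show "(a + n - 1) mod n \<noteq> a mod n"
    using mod_neq[of "n - 1" n a] n by simp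
  have "(a + n - 1) = Suc a + (n - 2)" using n by simp
  then show "(a + n - 1) mod n \<noteq> Suc a mod n"
    using mod_neq[of "n - 2" n "Suc a"] n by simp
qed

lemma C_cone:
  assumes C: "condC n V s" and n: "n \<ge> 3" and b: "b mod n \<noteq> a mod n"
  shows "s * cross (edg n V a) (vtx n V b - vtx n V a) \<ge> 0"
        "s * cross (edg n V (a + n - 1)) (vtx n V b - vtx n V a) \<ge> 0"
proof -
  show "s * cross (edg n V a) (vtx n V b - vtx n V a) \<ge> 0"
  proof (cases "b mod n = Suc a mod n")
    case True
    then have "vtx n V b = vtx n V (Suc a)" by (rule vtx_cong)
    then show ?thesis by (simp add: edg_def)
  next
    case False
    then show ?thesis using C b unfolding condC_def by (meson less_imp_le)
  qed
  let ?a = "a + n - 1"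
  show "s * cross (edg n V ?a) (vtx n V b - vtx n V a) \<ge> 0"
  proof (cases "b mod n = ?a mod n")
    case True
    then have "vtx n V b = vtx n V ?a" by (rule vtx_cong)
    then have "vtx n V b - vtx n V a = - edg n V ?a"
      using prev_facts(2)[OF n, of V a] by (simp add: edg_def)
    then show ?thesis by simp
  next
    case False
    have "b mod n \<noteq> Suc ?a mod n" using b prev_facts(1)[OF n, of a] by simp
    then have "s * cross (edg n V ?a) (vtx n V b - vtx n V ?a) > 0"
      using C False unfolding condC_def by blast
    moreover have "vtx n V b - vtx n V ?a = (vtx n V b - vtx n V a) + edg n V ?a"
      using prev_facts(2)[OF n, of V a] by (simp add: edg_def)
    then have "cross (edg n V ?a) (vtx n V b - vtx n V ?a) = cross (edg n V ?a) (vtx n V b - vtx n V a)"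
      by (metis add.right_neutral cross_add cross_self)
    ultimately show ?thesis by simp
  qed
qed

lemma C_distinct:
  assumes C: "condC n V s" and n: "n \<ge> 3" and b: "b mod n \<noteq> a mod n"
  shows "vtx n V b \<noteq> vtx n V a"
proof (cases "b mod n = Suc a mod n")
  case True
  then have "vtx n V b = vtx n V (Suc a)" by (rule vtx_cong)
  then have "vtx n V b - vtx n V a = edg n V a" by (simp add: edg_def)
  moreover have "edg n V a \<noteq> 0" using C_turn[OF C n, of a] by auto
  ultimately show ?thesis by auto
next
  case False
  then have "s * cross (edg n V a) (vtx n V b - vtx n V a) > 0"
    using C b unfolding condC_def by blast
  then show ?thesis by auto
qed

lemma opp_zero: "(c1::real) * X \<ge> 0 \<Longrightarrow> c2 * X \<ge> 0 \<Longrightarrow> c1 * c2 < 0 \<Longrightarrow> X = 0"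
  by (smt (verit, best) mult_less_0_iff)

lemma pointed_cone:
  assumes "s * cross p x \<ge> 0" "s * cross p y \<ge> 0" "s * cross q x \<ge> 0" "s * cross q y \<ge> 0"
    "s * cross q p > 0" "x = c1 *\<^sub>R u" "y = c2 *\<^sub>R u" "x \<noteq> 0" "y \<noteq> 0"
  shows "c1 * c2 > 0"
proof (rule ccontr)
  assume neg: "\<not> c1 * c2 > 0"
  have c: "c1 \<noteq> 0" "c2 \<noteq> 0" using assms(6-9) by auto
  then have "c1 * c2 \<noteq> 0" by simp
  then have neg': "c1 * c2 < 0" using neg by linarith
  have s: "s \<noteq> 0" using assms(5) by auto
  have "c1 * (s * cross p u) \<ge> 0" "c2 * (s * cross p u) \<ge> 0"
    using assms(1,2,6,7) by (simp_all add: algebra_simps)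
  then have "s * cross p u = 0" using neg' by (rule opp_zero)
  then have pu: "cross p u = 0" using s by simp
  have "c1 * (s * cross q u) \<ge> 0" "c2 * (s * cross q u) \<ge> 0"
    using assms(3,4,6,7) by (simp_all add: algebra_simps)
  then have "s * cross q u = 0" using neg' by (rule opp_zero)
  then have qu: "cross q u = 0" using s by simp
  have "cross q p *\<^sub>R u = cross u p *\<^sub>R q + cross q u *\<^sub>R p" by (rule cross_ident)
  then have "cross q p *\<^sub>R u = 0" using pu qu by (simp add: cross_anti[of u p])
  then have "u = 0" using assms(5) by auto
  then show False using assms(6,8) by simp
qed

lemma same_ray:
  assumes C: "condC n V s" and n: "n \<ge> 3" and d: "b mod n \<noteq> a mod n" "c mod n \<noteq> a mod n"
    and e: "vtx n V b - vtx n V a = c1 *\<^sub>R u" "vtx n V c - vtx n V a = c2 *\<^sub>R u"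
  shows "c1 * c2 > 0"
proof (rule pointed_cone)
  show "s * cross (edg n V a) (vtx n V b - vtx n V a) \<ge> 0" "s * cross (edg n V a) (vtx n V c - vtx n V a) \<ge> 0"
    "s * cross (edg n V (a+n-1)) (vtx n V b - vtx n V a) \<ge> 0" "s * cross (edg n V (a+n-1)) (vtx n V c - vtx n V a) \<ge> 0"
    using C_cone[OF C n] d by auto
  show "s * cross (edg n V (a+n-1)) (edg n V a) > 0"
    using C_turn[OF C n, of "a+n-1"] prev_facts(3)[OF n, of V a] by simp
  show "vtx n V b - vtx n V a \<noteq> 0" "vtx n V c - vtx n V a \<noteq> 0"
    using C_distinct[OF C n] d by auto
qed (use e in auto)

lemma C_strict:
  assumes C: "condC n V s" and n: "n \<ge> 3"
  shows "poly_strict n V"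
  unfolding poly_strict_def
proof (intro allI impI notI)
  fix i j k assume ijk: "i < n" "j < n" "k < n" "i \<noteq> j \<and> i \<noteq> k \<and> j \<noteq> k"
    and col: "collinear {V i, V j, V k}"
  have v: "V i = vtx n V i" "V j = vtx n V j" "V k = vtx n V k" using ijk by (simp_all add: vtx_lt)
  have m: "i mod n = i" "j mod n = j" "k mod n = k" using ijk by simp_all
  obtain u where u: "\<forall>x\<in>{V i, V j, V k}. \<forall>y\<in>{V i, V j, V k}. \<exists>c. x - y = c *\<^sub>R u"
    using col unfolding collinear_def by blast
  obtain c1 where c1: "V j - V i = c1 *\<^sub>R u" using u by blast
  obtain c2 where c2: "V k - V i = c2 *\<^sub>R u" using u by blast
  have e3: "V i - V j = (- c1) *\<^sub>R u" "V k - V j = (c2 - c1) *\<^sub>R u"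
    "V i - V k = (- c2) *\<^sub>R u" "V j - V k = (c1 - c2) *\<^sub>R u"
  proof -
    have "V i - V j = - (V j - V i)" "V k - V j = (V k - V i) - (V j - V i)"
      "V i - V k = - (V k - V i)" "V j - V k = (V j - V i) - (V k - V i)" by simp_all
    then show "V i - V j = (- c1) *\<^sub>R u" "V k - V j = (c2 - c1) *\<^sub>R u"
      "V i - V k = (- c2) *\<^sub>R u" "V j - V k = (c1 - c2) *\<^sub>R u"
      using c1 c2 by (simp_all add: scaleR_left_diff_distrib)
  qed
  have "c1 * c2 > 0" using same_ray[OF C n, of j i k c1 u c2] c1 c2 v m ijk by auto
  moreover have "(- c1) * (c2 - c1) > 0" using same_ray[OF C n, of i j k "-c1" u "c2 - c1"] e3 v m ijk by auto
  then have "c1 * (c1 - c2) > 0" by (simp add: algebra_simps)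
  moreover have "(- c2) * (c1 - c2) > 0" using same_ray[OF C n, of i k j "-c2" u "c1 - c2"] e3 v m ijk by auto
  then have "c2 * (c2 - c1) > 0" by (simp add: algebra_simps)
  ultimately show False by (auto simp: zero_less_mult_iff)
qed



lemma support:
  fixes S :: "(real \<times> real) set"
  assumes "convex S" "x \<in> S" "x \<notin> interior S"
  shows "\<exists>a. a \<noteq> 0 \<and> (\<forall>y\<in>S. inner a y \<le> inner a x)"
proof (cases "interior S = {}")
  case True
  then obtain a b where "a \<noteq> 0" "S \<subseteq> {x. a \<bullet> x = b}"
    using empty_interior_subset_hyperplane[OF assms(1)] by metis
  then have "\<forall>y\<in>S. inner a y = b" by blast
  then have "\<forall>y\<in>S. inner a y \<le> inner a x" using assms(2) by simp
  then show ?thesis using \<open>a \<noteq> 0\<close> by blast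
next
  case False
  then have ri: "rel_interior S = interior S" by (rule rel_interior_nonempty_interior)
  have xc: "x \<in> closure S" using assms(2) closure_subset by blast
  have xr: "x \<notin> rel_interior S" using assms(3) ri by simp
  obtain a where a: "a \<noteq> 0" "\<And>y. y \<in> closure S \<Longrightarrow> a \<bullet> x \<le> a \<bullet> y"
    using supporting_hyperplane_relative_frontier[OF assms(1) xc xr] by metis
  have "inner (-a) y \<le> inner (-a) x" if "y \<in> S" for y
  proof -
    have "y \<in> closure S" using that closure_subset by blast
    then have "a \<bullet> x \<le> a \<bullet> y" by (rule a(2))
    then show ?thesis by simp
  qed
  moreover have "-a \<noteq> 0" using a(1) by simp
  ultimately show ?thesis by blast
qed

lemma face_hull:
  fixes S :: "(real \<times> real) set"
  assumes "finite S" "x \<in> convex hull S" "\<forall>y\<in>S. inner a y \<le> inner a x"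
  shows "x \<in> convex hull {y\<in>S. inner a y = inner a x}"
proof -
  have sub: "convex hull S \<subseteq> {y. inner a y \<le> inner a x}"
    using assms(3) by (intro hull_minimal) (auto simp: convex_halfspace_le)
  let ?T = "convex hull S \<inter> {y. inner a y = inner a x}"
  have "?T face_of convex hull S"
    using sub by (intro face_of_Int_supporting_hyperplane_le) auto
  then obtain S' where S': "S' \<subseteq> S" "?T = convex hull S'"
    using face_of_convex_hull_subset[OF finite_imp_compact[OF assms(1)]] by metis
  have "x \<in> ?T" using assms(2) by simp
  then have xS': "x \<in> convex hull S'" using S' by simp
  have "S' \<subseteq> {y\<in>S. inner a y = inner a x}"
    using S' hull_subset[of S' convex] by blast
  then show ?thesis using xS' hull_mono by blast
qed

lemma vtx_in: "0 < n \<Longrightarrow> vtx n V j \<in> V ` {..<n}"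
  by (simp add: vtx_def)

lemma halfplane_inner: "s * cross e (y - A) = inner (- (s * snd e), s * fst e) (y - A)"
  by (cases e; cases y; cases A) (simp add: cross_def algebra_simps)

lemma C_hull_side:
  assumes C: "condC n V s" and n: "n \<ge> 3"
  shows "poly_conv n V \<subseteq> {y. inner (- (s * snd (edg n V i)), s * fst (edg n V i)) y
                              \<ge> inner (- (s * snd (edg n V i)), s * fst (edg n V i)) (vtx n V i)}"
  unfolding poly_conv_def
proof (intro hull_minimal)
  show "convex {y. inner (- (s * snd (edg n V i)), s * fst (edg n V i)) y
                              \<ge> inner (- (s * snd (edg n V i)), s * fst (edg n V i)) (vtx n V i)}"
    by (rule convex_halfspace_ge)
  show "V ` {..<n} \<subseteq> {y. inner (- (s * snd (edg n V i)), s * fst (edg n V i)) y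
                              \<ge> inner (- (s * snd (edg n V i)), s * fst (edg n V i)) (vtx n V i)}"
  proof
    fix y assume "y \<in> V ` {..<n}"
    then obtain j where j: "j < n" "y = V j" by auto
    then have yv: "y = vtx n V j" by (simp add: vtx_lt)
    have "s * cross (edg n V i) (y - vtx n V i) \<ge> 0"
    proof (cases "j mod n = i mod n")
      case True
      then show ?thesis using yv vtx_cong[OF True] by simp
    next
      case False
      then show ?thesis using C_cone(1)[OF C n False] yv by simp
    qed
    then show "y \<in> {y. inner (- (s * snd (edg n V i)), s * fst (edg n V i)) y
                              \<ge> inner (- (s * snd (edg n V i)), s * fst (edg n V i)) (vtx n V i)}"
      unfolding halfplane_inner by (simp add: inner_diff_right)
  qed
qed

lemma C_edges_in_frontier:
  assumes C: "condC n V s" and n: "n \<ge> 3" and x: "x \<in> closed_segment (vtx n V i) (vtx n V (Suc i))"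
  shows "x \<in> frontier (poly_conv n V)"
proof -
  let ?e = "edg n V i"
  let ?w = "(- (s * snd ?e), s * fst ?e) :: real \<times> real"
  have s0: "s \<noteq> 0" "?e \<noteq> 0" using C_turn[OF C n, of i] by auto
  have w0: "?w \<noteq> 0" using s0 by (cases ?e) (auto simp: zero_prod_def)
  have n0: "0 < n" using n by simp
  have "vtx n V i \<in> convex hull (V ` {..<n})" "vtx n V (Suc i) \<in> convex hull (V ` {..<n})"
    by (rule hull_inc[OF vtx_in[OF n0]])+
  then have xH: "x \<in> poly_conv n V" unfolding poly_conv_def
    using x closed_segment_subset[OF _ _ convex_convex_hull] by blast
  obtain u where u: "x = (1 - u) *\<^sub>R vtx n V i + u *\<^sub>R vtx n V (Suc i)"
    using x by (auto simp: in_segment)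
  have "x - vtx n V i = u *\<^sub>R ?e" using u by (simp add: edg_def algebra_simps)
  then have "s * cross ?e (x - vtx n V i) = 0" by simp
  then have eqw: "inner ?w x = inner ?w (vtx n V i)"
    unfolding halfplane_inner by (simp add: inner_diff_right)
  have "interior (poly_conv n V) \<subseteq> interior {y. inner ?w y \<ge> inner ?w (vtx n V i)}"
    using C_hull_side[OF C n, of i] by (rule interior_mono)
  also have "\<dots> = {y. inner ?w y > inner ?w (vtx n V i)}" by (rule interior_halfspace_ge[OF w0])
  finally have sub: "interior (poly_conv n V) \<subseteq> {y. inner ?w y > inner ?w (vtx n V i)}" .
  have "x \<notin> {y. inner ?w y > inner ?w (vtx n V i)}" using eqw by (simp only: mem_Collect_eq less_irrefl not_False_eq_True)
  then have "x \<notin> interior (poly_conv n V)" using sub by blast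
  then show ?thesis unfolding frontier_def using xH closure_subset[of "poly_conv n V"] by blast
qed




lemma C_frontier_in_edges:
  assumes C: "condC n V s" and n: "n \<ge> 3" and x: "x \<in> frontier (poly_conv n V)"
  shows "\<exists>i<n. x \<in> closed_segment (vtx n V i) (vtx n V (Suc i))"
proof -
  have n0: "0 < n" using n by simp
  let ?H = "poly_conv n V"
  have fin: "finite (V ` {..<n})" by simp
  have "closed ?H" unfolding poly_conv_def
    by (rule compact_imp_closed[OF compact_convex_hull[OF finite_imp_compact[OF fin]]])
  then have xH: "x \<in> ?H" and xi: "x \<notin> interior ?H" using x by (auto simp: frontier_def)
  have cH: "convex ?H" unfolding poly_conv_def by (rule convex_convex_hull)
  obtain a where a0: "a \<noteq> 0" and a: "\<forall>y\<in>?H. inner a y \<le> inner a x"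
    using support[OF cH xH xi] by blast
  have vH: "vtx n V j \<in> ?H" for j unfolding poly_conv_def by (rule hull_inc[OF vtx_in[OF n0]])
  have av: "inner a (vtx n V j) \<le> inner a x" for j using a vH by blast
  have "\<forall>y\<in>V ` {..<n}. inner a y \<le> inner a x" using a hull_subset[of "V ` {..<n}" convex]
    unfolding poly_conv_def by blast
  then have xM: "x \<in> convex hull {y \<in> V ` {..<n}. inner a y = inner a x}"
    using face_hull[OF fin _] xH unfolding poly_conv_def by blast
  then have "{y \<in> V ` {..<n}. inner a y = inner a x} \<noteq> {}" by (metis convex_hull_empty empty_iff)
  then obtain y where "y \<in> {y \<in> V ` {..<n}. inner a y = inner a x}" by blast
  then obtain j where j: "j < n" "inner a (vtx n V j) = inner a x"
    by (auto simp: vtx_lt)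
  let ?j' = "j + n - 1"
  let ?p = "edg n V j"
  let ?q = "vtx n V ?j' - vtx n V j"
  have pv: "vtx n V (Suc j) = vtx n V j + ?p" by (simp add: edg_def)
  have ap: "inner a ?p \<le> 0" using av[of "Suc j"] j(2) pv by (simp add: inner_add_right)
  have aq: "inner a ?q \<le> 0" using av[of ?j'] j(2) by (simp add: inner_diff_right)
  have qe: "?q = - edg n V ?j'" using prev_facts(2)[OF n, of V j] by (simp add: edg_def)
  have spq: "s * cross ?p ?q > 0"
    using C_turn[OF C n, of ?j'] prev_facts(3)[OF n, of V j] qe by (simp add: cross_anti[of ?p])
  have pq0: "cross ?p ?q \<noteq> 0" using spq by auto
  have adj: "k mod n = j mod n \<or> k mod n = Suc j mod n \<or> k mod n = ?j' mod n"
    if k: "inner a (vtx n V k) = inner a x" for k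
  proof (rule ccontr)
    assume "\<not> ?thesis"
    then have k1: "k mod n \<noteq> j mod n" "k mod n \<noteq> Suc j mod n" "k mod n \<noteq> ?j' mod n" by auto
    let ?u = "vtx n V k - vtx n V j"
    have au: "inner a ?u = 0" using k j(2) by (simp add: inner_diff_right)
    have spu: "s * cross ?p ?u > 0" using C k1 unfolding condC_def by blast
    have k2: "k mod n \<noteq> Suc ?j' mod n" using k1 prev_facts(1)[OF n, of j] by simp
    have "s * cross (edg n V ?j') (vtx n V k - vtx n V ?j') > 0"
      using C k1(3) k2 unfolding condC_def by blast
    moreover have "vtx n V k - vtx n V ?j' = ?u + edg n V ?j'"
      using prev_facts(2)[OF n, of V j] by (simp add: edg_def)
    then have "cross (edg n V ?j') (vtx n V k - vtx n V ?j') = cross (edg n V ?j') ?u"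
      by (metis add.right_neutral cross_add cross_self)
    ultimately have "s * cross (edg n V ?j') ?u > 0" by simp
    then have suq: "s * cross ?u ?q > 0" using qe by (simp add: cross_anti[of ?u])
    have "s * (cross ?p ?q * inner a ?u) = (s * cross ?u ?q) * inner a ?p + (s * cross ?p ?u) * inner a ?q"
      by (simp only: inner_ident[of ?p ?q a ?u] distrib_left mult.assoc)
    then have "(s * cross ?u ?q) * inner a ?p + (s * cross ?p ?u) * inner a ?q = 0" using au by simp
    moreover have "(s * cross ?u ?q) * inner a ?p \<le> 0" using suq ap by (meson less_imp_le mult_nonneg_nonpos)
    moreover have "(s * cross ?p ?u) * inner a ?q \<le> 0" using spu aq by (meson less_imp_le mult_nonneg_nonpos)
    ultimately have "(s * cross ?u ?q) * inner a ?p = 0" "(s * cross ?p ?u) * inner a ?q = 0" by linarith+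
    then have "inner a ?p = 0" "inner a ?q = 0" using suq spu by auto
    then have "a = 0" using perp_zero pq0 by blast
    then show False using a0 by simp
  qed
  have notboth: "\<not> (inner a (vtx n V (Suc j)) = inner a x \<and> inner a (vtx n V ?j') = inner a x)"
  proof
    assume h: "inner a (vtx n V (Suc j)) = inner a x \<and> inner a (vtx n V ?j') = inner a x"
    have "inner a ?p = 0" using h j(2) pv by (simp add: inner_add_right)
    moreover have "inner a ?q = 0" using h j(2) by (simp add: inner_diff_right)
    ultimately have "a = 0" using perp_zero pq0 by blast
    then show False using a0 by simp
  qed
  have Mchar: "{y \<in> V ` {..<n}. inner a y = inner a x} \<subseteq> {vtx n V j, vtx n V (Suc j), vtx n V ?j'}"
  proof
    fix y assume "y \<in> {y \<in> V ` {..<n}. inner a y = inner a x}"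
    then obtain k where k: "k < n" "y = vtx n V k" "inner a (vtx n V k) = inner a x"
      by (auto simp: vtx_lt)
    then show "y \<in> {vtx n V j, vtx n V (Suc j), vtx n V ?j'}"
      using adj[OF k(3)] vtx_cong[of k n j V] vtx_cong[of k n "Suc j" V] vtx_cong[of k n ?j' V] by auto
  qed
  show ?thesis
  proof (cases "inner a (vtx n V (Suc j)) = inner a x")
    case True
    then have "inner a (vtx n V ?j') \<noteq> inner a x" using notboth by blast
    then have "{y \<in> V ` {..<n}. inner a y = inner a x} \<subseteq> {vtx n V j, vtx n V (Suc j)}"
      using Mchar by auto
    then have "x \<in> convex hull {vtx n V j, vtx n V (Suc j)}" using xM hull_mono by blast
    then show ?thesis using j(1) by (auto simp: segment_convex_hull)
  next
    case False
    then have "{y \<in> V ` {..<n}. inner a y = inner a x} \<subseteq> {vtx n V ?j', vtx n V j}"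
      using Mchar by auto
    then have "x \<in> convex hull {vtx n V ?j', vtx n V j}" using xM hull_mono by blast
    moreover have "vtx n V (?j' mod n) = vtx n V ?j'" by simp
    moreover have "vtx n V (Suc (?j' mod n)) = vtx n V j"
      using prev_facts(2)[OF n, of V j] by (metis mod_Suc_eq vtx_mod)
    ultimately have "x \<in> closed_segment (vtx n V (?j' mod n)) (vtx n V (Suc (?j' mod n)))"
      by (simp add: segment_convex_hull)
    moreover have "?j' mod n < n" using n0 by simp
    ultimately show ?thesis by blast
  qed
qed

lemma C_convex:
  assumes C: "condC n V s" and n: "n \<ge> 3"
  shows "poly_convex n V"
  unfolding poly_convex_def
proof
  show "(\<Union>i<n. closed_segment (vtx n V i) (vtx n V (Suc i))) \<subseteq> frontier (poly_conv n V)"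
    using C_edges_in_frontier[OF C n] by blast
  show "frontier (poly_conv n V) \<subseteq> (\<Union>i<n. closed_segment (vtx n V i) (vtx n V (Suc i)))"
    using C_frontier_in_edges[OF C n] by blast
qed

lemma C_scp:
  assumes C: "condC n V s" and n: "n \<ge> 3"
  shows "strictly_convex_poly n V"
  using C_strict[OF C n] C_convex[OF C n] by (simp add: strictly_convex_poly_def)



lemma sgn3: "x * y > 0 \<Longrightarrow> x * z > 0 \<Longrightarrow> y * z > (0::real)"
  by (auto simp: zero_less_mult_iff)

lemma perp_decomp:
  fixes a d :: "real \<times> real"
  assumes "inner a d = 0"
  shows "d = (cross a d / inner a a) *\<^sub>R (- snd a, fst a) \<or> a = 0"
proof (cases "a = 0")
  case False
  obtain a1 a2 d1 d2 where ad: "a = (a1, a2)" "d = (d1, d2)" by (cases a, cases d)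
  have h: "a1 * d1 + a2 * d2 = 0" using assms ad by simp
  have nz: "a1 * a1 + a2 * a2 \<noteq> 0" using False ad
    by (metis inner_Pair inner_eq_zero_iff inner_real_def)
  have "d1 * (a1 * a1 + a2 * a2) = (a1 * d2 - a2 * d1) * (- a2)"
    using h by (simp add: algebra_simps) (metis mult.commute mult.left_commute add_eq_0_iff2 mult_minus_left) 
  moreover have "d2 * (a1 * a1 + a2 * a2) = (a1 * d2 - a2 * d1) * a1"
    using h by (simp add: algebra_simps) (metis mult.commute mult.left_commute add_eq_0_iff2 mult_minus_left)
  ultimately show ?thesis using nz ad by (simp add: cross_def field_simps)
qed simp

lemma collinear_line:
  fixes a p q r :: "real \<times> real"
  assumes "a \<noteq> 0" "inner a p = c" "inner a q = c" "inner a r = c"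
  shows "collinear {p, q, r}"
  unfolding collinear_def
proof (intro exI[of _ "(- snd a, fst a)"] ballI)
  fix x y assume "x \<in> {p, q, r}" "y \<in> {p, q, r}"
  then have "inner a (x - y) = 0" using assms by (auto simp: inner_diff_right)
  then show "\<exists>c. x - y = c *\<^sub>R (- snd a, fst a)" using perp_decomp assms(1) by blast
qed

lemma lagrange2: "cross e a * cross e w = inner e e * inner a w - inner e a * inner e w"
  by (cases e; cases a; cases w) (simp add: cross_def algebra_simps)

lemma edge_support:
  assumes S: "strictly_convex_poly n V" and n: "n \<ge> 3"
  shows "\<exists>t. \<forall>j. j mod n \<noteq> i mod n \<and> j mod n \<noteq> Suc i mod n \<longrightarrow>
           t * cross (edg n V i) (vtx n V j - vtx n V i) > 0"
proof -
  have n0: "0 < n" using n by simp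
  have st: "poly_strict n V" and cv: "poly_convex n V" using S by (auto simp: strictly_convex_poly_def)
  let ?H = "poly_conv n V"
  let ?A = "vtx n V i" let ?B = "vtx n V (Suc i)"
  define m where "m = midpoint ?A ?B"
  have "m \<in> closed_segment (vtx n V (i mod n)) (vtx n V (Suc (i mod n)))"
    unfolding m_def by (metis mod_Suc_eq vtx_mod midpoint_in_closed_segment)
  moreover have "i mod n < n" using n0 by simp
  ultimately have mf: "m \<in> frontier ?H" using cv unfolding poly_convex_def by blast
  have fin: "finite (V ` {..<n})" by simp
  have "closed ?H" unfolding poly_conv_def
    by (rule compact_imp_closed[OF compact_convex_hull[OF finite_imp_compact[OF fin]]])
  then have mH: "m \<in> ?H" and mi: "m \<notin> interior ?H" using mf by (auto simp: frontier_def)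
  have cH: "convex ?H" unfolding poly_conv_def by (rule convex_convex_hull)
  obtain a where a0: "a \<noteq> 0" and a: "\<forall>y\<in>?H. inner a y \<le> inner a m"
    using support[OF cH mH mi] by blast
  have vH: "vtx n V j \<in> ?H" for j unfolding poly_conv_def by (rule hull_inc[OF vtx_in[OF n0]])
  have av: "inner a (vtx n V j) \<le> inner a m" for j using a vH by blast
  have am: "2 * inner a m = inner a ?A + inner a ?B"
    unfolding m_def midpoint_def by (simp add: inner_add_right)
  have avg1: "x = z" if "x \<le> z" "y \<le> z" "2 * z = x + y" for x y z :: real
    using that by linarith
  have avg2: "y = z" if "x \<le> z" "y \<le> z" "2 * z = x + y" for x y z :: real
    using that by linarith
  have aA: "inner a ?A = inner a m" by (rule avg1[OF av[of i] av[of "Suc i"] am])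
  have aB: "inner a ?B = inner a m" by (rule avg2[OF av[of i] av[of "Suc i"] am])
  have dist: "i mod n \<noteq> Suc i mod n" using mod_neq[of 1 n i] n by simp
  have colcontra: "\<not> collinear {vtx n V i, vtx n V (Suc i), vtx n V j}"
    if j: "j mod n \<noteq> i mod n" "j mod n \<noteq> Suc i mod n" for j
  proof -
    have "\<not> collinear {V (i mod n), V (Suc i mod n), V (j mod n)}"
      using st dist j n0 unfolding poly_strict_def by (metis mod_less_divisor)
    then show ?thesis by (simp add: vtx_def)
  qed
  have e0: "edg n V i \<noteq> 0"
  proof
    assume "edg n V i = 0"
    then have "?A = ?B" by (simp add: edg_def)
    then have "collinear {vtx n V i, vtx n V (Suc i), vtx n V (Suc (Suc i))}" by (simp add: collinear_2)
    moreover have "Suc (Suc i) mod n \<noteq> i mod n" using mod_neq[of 2 n i] n by simp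
    moreover have "Suc (Suc i) mod n \<noteq> Suc i mod n" using mod_neq[of 1 n "Suc i"] n by simp
    ultimately show False using colcontra by blast
  qed
  have ae: "inner a (edg n V i) = 0" using aA aB by (simp add: edg_def inner_diff_right)
  show ?thesis
  proof (intro exI[of _ "- cross (edg n V i) a"] allI impI)
    fix j assume j: "j mod n \<noteq> i mod n \<and> j mod n \<noteq> Suc i mod n"
    have "inner a (vtx n V j) \<noteq> inner a m"
      using colcontra[of j] j collinear_line[OF a0 aA aB] by blast
    then have lt: "inner a (vtx n V j - ?A) < 0" using av[of j] aA by (simp add: inner_diff_right)
    have "cross (edg n V i) a * cross (edg n V i) (vtx n V j - ?A)
          = inner (edg n V i) (edg n V i) * inner a (vtx n V j - ?A)"
      using lagrange2[of "edg n V i" a "vtx n V j - ?A"] ae by (simp only: inner_commute[of "edg n V i" a] mult_zero_left diff_zero)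
    moreover have "inner (edg n V i) (edg n V i) > 0" using e0 by simp
    ultimately show "- cross (edg n V i) a * cross (edg n V i) (vtx n V j - ?A) > 0"
      using lt by (simp add: mult_pos_neg)
  qed
qed

lemma scp_C:
  assumes S: "strictly_convex_poly n V" and n: "n \<ge> 3"
  shows "\<exists>s. condC n V s"
proof -
  have "\<forall>i. \<exists>t. \<forall>j. j mod n \<noteq> i mod n \<and> j mod n \<noteq> Suc i mod n \<longrightarrow>
           t * cross (edg n V i) (vtx n V j - vtx n V i) > 0"
    using edge_support[OF S n] by blast
  then obtain tf where tf: "\<And>i j. j mod n \<noteq> i mod n \<and> j mod n \<noteq> Suc i mod n \<Longrightarrow>
           tf i * cross (edg n V i) (vtx n V j - vtx n V i) > 0"
    by metis
  define c where "c i = cross (edg n V i) (edg n V (Suc i))" for i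
  have c1: "tf i * c i > 0" for i
  proof -
    have "Suc (Suc i) mod n \<noteq> i mod n" using mod_neq[of 2 n i] n by simp
    moreover have "Suc (Suc i) mod n \<noteq> Suc i mod n" using mod_neq[of 1 n "Suc i"] n by simp
    ultimately have "tf i * cross (edg n V i) (vtx n V (Suc (Suc i)) - vtx n V i) > 0" using tf by blast
    moreover have "vtx n V (Suc (Suc i)) - vtx n V i = edg n V i + edg n V (Suc i)"
      by (simp add: edg_def)
    ultimately show ?thesis by (simp add: c_def)
  qed
  have c2: "tf (Suc i) * c i > 0" for i
  proof -
    have "i mod n \<noteq> Suc i mod n" using mod_neq[of 1 n i] n by simp
    moreover have "i mod n \<noteq> Suc (Suc i) mod n" using mod_neq[of 2 n i] n by simp
    ultimately have "tf (Suc i) * cross (edg n V (Suc i)) (vtx n V i - vtx n V (Suc i)) > 0" using tf by metis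
    moreover have "vtx n V i - vtx n V (Suc i) = - edg n V i" by (simp add: edg_def)
    ultimately show ?thesis by (simp add: c_def cross_anti[of "edg n V (Suc i)"])
  qed
  have cc: "c i * c (Suc i) > 0" for i using sgn3[OF c2[of i] c1[of "Suc i"]] .
  have c0: "c i \<noteq> 0" for i using c1[of i] by auto
  have ind: "c 0 * c i > 0" for i
  proof (induction i)
    case 0 then show ?case using c0[of 0] by (auto simp: zero_less_mult_iff)
  next
    case (Suc i)
    have "c i * c 0 > 0" using Suc by (simp add: mult.commute)
    then show ?case using sgn3 cc[of i] by blast
  qed
  show ?thesis
  proof (intro exI[of _ "c 0"], unfold condC_def, intro allI impI)
    fix i j assume j: "j mod n \<noteq> i mod n \<and> j mod n \<noteq> Suc i mod n"
    have "c i * cross (edg n V i) (vtx n V j - vtx n V i) > 0" using sgn3[OF c1[of i] tf[OF j]] .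
    moreover have "c i * c 0 > 0" using ind[of i] by (simp add: mult.commute)
    ultimately show "c 0 * cross (edg n V i) (vtx n V j - vtx n V i) > 0" using sgn3 by blast
  qed
qed



lemma cyc_mono:
  fixes \<beta> :: "nat \<Rightarrow> real"
  assumes n0: "0 < n" and per: "\<And>i. \<beta> (i mod n) = \<beta> i"
    and neq: "\<And>i. \<beta> (Suc i) \<noteq> \<beta> i"
    and uniq: "\<And>i m. \<beta> (Suc i) < \<beta> i \<Longrightarrow> \<beta> (Suc m) < \<beta> m \<Longrightarrow> i mod n = m mod n"
  shows "\<exists>k<n. \<forall>j. Suc j < n \<longrightarrow> \<beta> ((k + j) mod n) < \<beta> ((k + Suc j) mod n)"
proof (cases "\<exists>i. \<beta> (Suc i) < \<beta> i")
  case True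
  then obtain i where i: "\<beta> (Suc i) < \<beta> i" by blast
  show ?thesis
  proof (intro exI[of _ "Suc i mod n"] conjI allI impI)
    show "Suc i mod n < n" using n0 by simp
    fix j assume j: "Suc j < n"
    let ?t = "Suc i mod n + j"
    have "?t mod n = (i + Suc j) mod n" by (simp add: mod_add_left_eq)
    then have "?t mod n \<noteq> i mod n" using mod_neq[of "Suc j" n i] j by simp
    then have "\<not> \<beta> (Suc ?t) < \<beta> ?t" using uniq[OF _ i] by metis
    then have "\<beta> ?t < \<beta> (Suc ?t)" using neq[of ?t] by linarith
    then show "\<beta> ((Suc i mod n + j) mod n) < \<beta> ((Suc i mod n + Suc j) mod n)"
      by (simp add: per)
  qed
next
  case False
  show ?thesis
  proof (intro exI[of _ 0] conjI allI impI)
    show "0 < n" by (rule n0)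
    fix j assume "Suc j < n"
    have "\<beta> j < \<beta> (Suc j)" using False neq[of j] by (metis linorder_neqE_linordered_idom)
    then show "\<beta> ((0 + j) mod n) < \<beta> ((0 + Suc j) mod n)" by (simp add: per)
  qed
qed

lemma poly_arg_edg: "poly_arg n V i = vec_arg (edg n V i)"
  by (simp add: poly_arg_def edg_def)

lemma poly_arg_mod: "poly_arg n V (i mod n) = poly_arg n V i"
  by (simp add: poly_arg_edg)

lemma cross_polar:
  "cross (r1 * cos a, r1 * sin a) (r2 * cos b, r2 * sin b) = r1 * r2 * sin (b - a)"
  by (simp add: cross_def sin_diff algebra_simps)

definition lexlt :: "real \<times> real \<Rightarrow> real \<times> real \<Rightarrow> bool" where
  "lexlt P Q \<longleftrightarrow> snd P < snd Q \<or> (snd P = snd Q \<and> fst P < fst Q)"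

lemma lexlt_asym: "lexlt P Q \<Longrightarrow> lexlt Q P \<Longrightarrow> False"
  by (auto simp: lexlt_def)

lemma snd_ident: "cross p q * snd w = cross w q * snd p + cross p w * snd q"
  by (cases p; cases q; cases w) (simp add: cross_def algebra_simps)

lemma edge_polar:
  assumes "edg n V i \<noteq> 0"
  shows "edg n V i = (norm (edg n V i) * cos (poly_arg n V i), norm (edg n V i) * sin (poly_arg n V i))"
    "0 \<le> poly_arg n V i" "poly_arg n V i < 2 * pi"
  using vec_arg_prop[OF assms] by (simp_all add: poly_arg_edg)

lemma turn_sin:
  assumes C: "condC n V s" and n: "n \<ge> 3"
  shows "s * sin (poly_arg n V (Suc i) - poly_arg n V i) > 0"
proof -
  have t: "s * cross (edg n V i) (edg n V (Suc i)) > 0" by (rule C_turn[OF C n])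
  then have e: "edg n V i \<noteq> 0" "edg n V (Suc i) \<noteq> 0" by auto
  have "cross (edg n V i) (edg n V (Suc i)) = norm (edg n V i) * norm (edg n V (Suc i)) *
          sin (poly_arg n V (Suc i) - poly_arg n V i)"
    by (subst edge_polar(1)[OF e(1)], subst edge_polar(1)[OF e(2)], rule cross_polar)
  then have "s * sin (poly_arg n V (Suc i) - poly_arg n V i) * (norm (edg n V i) * norm (edg n V (Suc i))) > 0"
    using t by (simp add: algebra_simps)
  moreover have "norm (edg n V i) * norm (edg n V (Suc i)) > 0" using e by simp
  ultimately show ?thesis by (simp add: zero_less_mult_iff)
qed

lemma other_vertex:
  assumes C: "condC n V s" and n: "n \<ge> 3"
    and j: "j mod n \<noteq> i mod n" "j mod n \<noteq> Suc i mod n" "j mod n \<noteq> Suc (Suc i) mod n"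
  shows "s * cross (edg n V i) (vtx n V j - vtx n V (Suc i)) > 0"
        "s * cross (edg n V (Suc i)) (vtx n V j - vtx n V (Suc i)) > 0"
proof -
  have "s * cross (edg n V i) (vtx n V j - vtx n V i) > 0" using C j unfolding condC_def by blast
  moreover have "vtx n V j - vtx n V i = (vtx n V j - vtx n V (Suc i)) + edg n V i" by (simp add: edg_def)
  then have "cross (edg n V i) (vtx n V j - vtx n V i) = cross (edg n V i) (vtx n V j - vtx n V (Suc i))"
    by (metis add.right_neutral cross_add cross_self)
  ultimately show "s * cross (edg n V i) (vtx n V j - vtx n V (Suc i)) > 0" by simp
  show "s * cross (edg n V (Suc i)) (vtx n V j - vtx n V (Suc i)) > 0" using C j unfolding condC_def by blast
qed



lemma descent_lexmin:
  assumes C: "condC n V s" and n: "n \<ge> 3" and s: "s > 0"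
    and d: "poly_arg n V (Suc i) < poly_arg n V i" and j: "j mod n \<noteq> Suc i mod n"
  shows "lexlt (vtx n V (Suc i)) (vtx n V j)"
proof -
  let ?a = "poly_arg n V i" and ?b = "poly_arg n V (Suc i)"
  let ?p = "edg n V i" and ?q = "edg n V (Suc i)"
  let ?P = "vtx n V (Suc i)"
  have t: "s * cross ?p ?q > 0" by (rule C_turn[OF C n])
  then have cpq: "cross ?p ?q > 0" using s by (simp add: zero_less_mult_iff)
  have e: "?p \<noteq> 0" "?q \<noteq> 0" using t by auto
  have sn: "sin (?b - ?a) > 0" using turn_sin[OF C n, of i] s by (simp add: zero_less_mult_iff)
  have ab: "?a - ?b > pi"
  proof (rule ccontr)
    assume "\<not> ?a - ?b > pi"
    then have "sin (?a - ?b) \<ge> 0" using d by (intro sin_ge_zero) auto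
    moreover have "sin (?b - ?a) = - sin (?a - ?b)" by (metis minus_diff_eq sin_minus)
    ultimately show False using sn by simp
  qed
  have pa: "0 \<le> ?a" "?a < 2 * pi" "0 \<le> ?b" "?b < 2 * pi" using edge_polar e by auto
  have sa: "sin ?a < 0" using ab pa by (intro sin_lt_zero) auto
  have sb: "sin ?b \<ge> 0" using ab pa by (intro sin_ge_zero) auto
  have sb0: "sin ?b = 0 \<Longrightarrow> cos ?b = 1"
  proof -
    assume "sin ?b = 0"
    then have "\<not> (0 < ?b \<and> ?b < pi)" using sin_gt_zero by fastforce
    then have "?b = 0" using ab pa by auto
    then show "cos ?b = 1" by simp
  qed
  have np: "norm ?p > 0" "norm ?q > 0" using e by auto
  have sp: "snd ?p < 0" using edge_polar(1)[OF e(1)] sa np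
    by (metis mult_pos_neg snd_conv)
  have sq: "snd ?q > 0 \<or> (snd ?q = 0 \<and> fst ?q > 0)"
  proof -
    have "snd ?q = norm ?q * sin ?b" "fst ?q = norm ?q * cos ?b"
      using edge_polar(1)[OF e(2)] by (metis snd_conv, metis fst_conv)
    then show ?thesis using sb sb0 np by (cases "sin ?b = 0") auto
  qed
  have lex: "lexlt ?P (?P + w)" if "snd w > 0 \<or> (snd w = 0 \<and> fst w > 0)" for w
    using that by (auto simp: lexlt_def)
  show ?thesis
  proof (cases "j mod n = i mod n")
    case True
    then have "vtx n V j = ?P + (- ?p)" using vtx_cong[OF True] by (simp add: edg_def)
    then show ?thesis using lex[of "- ?p"] sp by simp
  next
    case F1: False
    show ?thesis
    proof (cases "j mod n = Suc (Suc i) mod n")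
      case True
      then have "vtx n V j = ?P + ?q" using vtx_cong[OF True] by (simp add: edg_def)
      then show ?thesis using lex[of ?q] sq by simp
    next
      case False
      let ?w = "vtx n V j - ?P"
      have "s * cross ?p ?w > 0" "s * cross ?q ?w > 0" using other_vertex[OF C n F1 j False] by auto
      then have cw: "cross ?p ?w > 0" "cross ?q ?w > 0" using s by (simp_all add: zero_less_mult_iff)
      have "cross ?w ?q * snd ?p > 0" using cw(2) sp by (simp add: cross_anti[of ?w] mult_neg_neg)
      moreover have "cross ?p ?w * snd ?q \<ge> 0" using cw(1) sq by auto
      ultimately have "cross ?p ?q * snd ?w > 0" using snd_ident[of ?p ?q ?w] by linarith
      then have "snd ?w > 0" using cpq by (simp add: zero_less_mult_iff)
      then have "lexlt ?P (?P + ?w)" using lex by blast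
      then show ?thesis by simp
    qed
  qed
qed

lemma ascent_lexmax:
  assumes C: "condC n V s" and n: "n \<ge> 3" and s: "s < 0"
    and d: "poly_arg n V i < poly_arg n V (Suc i)" and j: "j mod n \<noteq> Suc i mod n"
  shows "lexlt (vtx n V j) (vtx n V (Suc i))"
proof -
  let ?a = "poly_arg n V i" and ?b = "poly_arg n V (Suc i)"
  let ?p = "edg n V i" and ?q = "edg n V (Suc i)"
  let ?P = "vtx n V (Suc i)"
  have t: "s * cross ?p ?q > 0" by (rule C_turn[OF C n])
  then have cpq: "cross ?p ?q < 0" using s by (simp add: zero_less_mult_iff)
  have e: "?p \<noteq> 0" "?q \<noteq> 0" using t by auto
  have sn: "sin (?b - ?a) < 0" using turn_sin[OF C n, of i] s by (simp add: zero_less_mult_iff)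
  have ab: "?b - ?a > pi"
  proof (rule ccontr)
    assume "\<not> ?b - ?a > pi"
    then have "sin (?b - ?a) \<ge> 0" using d by (intro sin_ge_zero) auto
    then show False using sn by simp
  qed
  have pa: "0 \<le> ?a" "?a < 2 * pi" "0 \<le> ?b" "?b < 2 * pi" using edge_polar e by auto
  have sb: "sin ?b < 0" using ab pa by (intro sin_lt_zero) auto
  have sa: "sin ?a \<ge> 0" using ab pa by (intro sin_ge_zero) auto
  have sa0: "sin ?a = 0 \<Longrightarrow> cos ?a = 1"
  proof -
    assume "sin ?a = 0"
    then have "\<not> (0 < ?a \<and> ?a < pi)" using sin_gt_zero by fastforce
    then have "?a = 0" using ab pa by auto
    then show "cos ?a = 1" by simp
  qed
  have np: "norm ?p > 0" "norm ?q > 0" using e by auto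
  have sq: "snd ?q < 0" using edge_polar(1)[OF e(2)] sb np
    by (metis mult_pos_neg snd_conv)
  have sp: "snd ?p > 0 \<or> (snd ?p = 0 \<and> fst ?p > 0)"
  proof -
    have "snd ?p = norm ?p * sin ?a" "fst ?p = norm ?p * cos ?a"
      using edge_polar(1)[OF e(1)] by (metis snd_conv, metis fst_conv)
    then show ?thesis using sa sa0 np by (cases "sin ?a = 0") auto
  qed
  have lex: "lexlt (?P + w) ?P" if "snd w < 0 \<or> (snd w = 0 \<and> fst w < 0)" for w
    using that by (auto simp: lexlt_def)
  show ?thesis
  proof (cases "j mod n = i mod n")
    case True
    then have "vtx n V j = ?P + (- ?p)" using vtx_cong[OF True] by (simp add: edg_def)
    then show ?thesis using lex[of "- ?p"] sp by auto
  next
    case F1: False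
    show ?thesis
    proof (cases "j mod n = Suc (Suc i) mod n")
      case True
      then have "vtx n V j = ?P + ?q" using vtx_cong[OF True] by (simp add: edg_def)
      then show ?thesis using lex[of ?q] sq by simp
    next
      case False
      let ?w = "vtx n V j - ?P"
      have "s * cross ?p ?w > 0" "s * cross ?q ?w > 0" using other_vertex[OF C n F1 j False] by auto
      then have cw: "cross ?p ?w < 0" "cross ?q ?w < 0" using s by (simp_all add: zero_less_mult_iff)
      have "cross ?w ?q * snd ?p \<ge> 0" using cw(2) sp by (auto simp: cross_anti[of ?w])
      moreover have "cross ?p ?w * snd ?q > 0" using cw(1) sq by (simp add: mult_neg_neg)
      ultimately have "cross ?p ?q * snd ?w > 0" using snd_ident[of ?p ?q ?w] by linarith
      then have "snd ?w < 0" using cpq by (simp add: zero_less_mult_iff)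
      then have "lexlt (?P + ?w) ?P" using lex by blast
      then show ?thesis by simp
    qed
  qed
qed

lemma suc_mod_inj: "Suc m mod n = Suc i mod n \<Longrightarrow> m mod n = i mod (n::nat)"
  by (metis Zero_not_Suc mod_Suc nat.inject)

lemma C_lo:
  assumes C: "condC n V s" and n: "n \<ge> 3"
  shows "locally_ordinary n V"
proof -
  have "edg n V i \<noteq> 0" for i using C_turn[OF C n, of i] by auto
  then show ?thesis unfolding locally_ordinary_def by (metis (no_types) edg_def right_minus_eq)
qed

lemma C_incr:
  assumes C: "condC n V s" and n: "n \<ge> 3" and s: "s > 0"
  shows "c_strictly_increasing n V"
proof -
  have n0: "0 < n" using n by simp
  have lo: "locally_ordinary n V" by (rule C_lo[OF C n])
  have "\<exists>k<n. \<forall>j. Suc j < n \<longrightarrow> poly_arg n V ((k + j) mod n) < poly_arg n V ((k + Suc j) mod n)"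
  proof (rule cyc_mono[OF n0])
    show "poly_arg n V (i mod n) = poly_arg n V i" for i by (rule poly_arg_mod)
    show "poly_arg n V (Suc i) \<noteq> poly_arg n V i" for i using turn_sin[OF C n, of i] by auto
    show "i mod n = m mod n" if "poly_arg n V (Suc i) < poly_arg n V i" "poly_arg n V (Suc m) < poly_arg n V m" for i m
    proof (rule ccontr)
      assume h: "i mod n \<noteq> m mod n"
      then have "Suc m mod n \<noteq> Suc i mod n" using suc_mod_inj by metis
      then have "lexlt (vtx n V (Suc i)) (vtx n V (Suc m))" using descent_lexmin[OF C n s that(1)] by blast
      moreover have "lexlt (vtx n V (Suc m)) (vtx n V (Suc i))"
        using descent_lexmin[OF C n s that(2)] \<open>Suc m mod n \<noteq> Suc i mod n\<close> by metis
      ultimately show False by (rule lexlt_asym)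
    qed
  qed
  then show ?thesis using lo by (simp add: c_strictly_increasing_def)
qed

lemma C_decr:
  assumes C: "condC n V s" and n: "n \<ge> 3" and s: "s < 0"
  shows "c_strictly_decreasing n V"
proof -
  have n0: "0 < n" using n by simp
  have lo: "locally_ordinary n V" by (rule C_lo[OF C n])
  have "\<exists>k<n. \<forall>j. Suc j < n \<longrightarrow> - poly_arg n V ((k + j) mod n) < - poly_arg n V ((k + Suc j) mod n)"
  proof (rule cyc_mono[OF n0, where \<beta> = "\<lambda>i. - poly_arg n V i"])
    show "- poly_arg n V (i mod n) = - poly_arg n V i" for i by (simp add: poly_arg_mod)
    show "- poly_arg n V (Suc i) \<noteq> - poly_arg n V i" for i using turn_sin[OF C n, of i] by auto
    show "i mod n = m mod n" if "- poly_arg n V (Suc i) < - poly_arg n V i" "- poly_arg n V (Suc m) < - poly_arg n V m" for i m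
    proof (rule ccontr)
      assume h: "i mod n \<noteq> m mod n"
      then have "Suc m mod n \<noteq> Suc i mod n" using suc_mod_inj by metis
      have a1: "poly_arg n V i < poly_arg n V (Suc i)" "poly_arg n V m < poly_arg n V (Suc m)" using that by auto
      have "lexlt (vtx n V (Suc m)) (vtx n V (Suc i))" using ascent_lexmax[OF C n s a1(1)] \<open>Suc m mod n \<noteq> Suc i mod n\<close> by blast
      moreover have "lexlt (vtx n V (Suc i)) (vtx n V (Suc m))"
        using ascent_lexmax[OF C n s a1(2)] \<open>Suc m mod n \<noteq> Suc i mod n\<close> by metis
      ultimately show False by (rule lexlt_asym)
    qed
  qed
  then show ?thesis using lo by (simp add: c_strictly_decreasing_def)
qed



lemma sum_split_at:
  fixes g :: "nat \<Rightarrow> real"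
  assumes "u \<le> n"
  shows "(\<Sum>t<n. g t) = (\<Sum>t<u. g t) + (\<Sum>t\<in>{u..<n}. g t)"
proof -
  have "{..<n} = {..<u} \<union> {u..<n}" using assms by auto
  moreover have d: "{..<u} \<inter> {u..<n} = {}" by auto
  ultimately show ?thesis using sum.union_disjoint[OF finite_lessThan finite_atLeastLessThan d, of g] by simp
qed

lemma sum_neg':
  fixes g :: "nat \<Rightarrow> real"
  assumes "finite A" "A \<noteq> {}" "\<And>x. x \<in> A \<Longrightarrow> g x < 0"
  shows "sum g A < 0"
proof -
  have "sum (\<lambda>x. - g x) A > 0" using assms by (intro sum_pos) auto
  then show ?thesis by (simp add: sum_negf)
qed

lemma core_gen:
  fixes f :: "nat \<Rightarrow> real \<times> real" and \<rho> r :: "nat \<Rightarrow> real"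
  assumes u: "2 \<le> u" "u < n"
    and f: "\<And>t. t < n \<Longrightarrow> f t = (r t * cos (\<theta> + \<rho> t), r t * sin (\<theta> + \<rho> t))"
    and r: "\<And>t. t < n \<Longrightarrow> r t > 0"
    and \<rho>0: "\<rho> 0 = 0"
    and tot: "(\<Sum>t<n. f t) = 0"
  shows "cross (f 0) (\<Sum>t<u. f t) = (\<Sum>t<u. r 0 * r t * sin (\<rho> t))"
    "(\<Sum>t<n. r 0 * r t * sin (\<rho> t)) = 0"
proof -
  have g: "cross (f 0) (f t) = r 0 * r t * sin (\<rho> t)" if "t < n" for t
    using f[OF that] f[of 0] that \<rho>0 cross_polar by simp
  show "cross (f 0) (\<Sum>t<u. f t) = (\<Sum>t<u. r 0 * r t * sin (\<rho> t))"
    using g u by (simp add: cross_sum)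
  have "cross (f 0) (\<Sum>t<n. f t) = (\<Sum>t<n. r 0 * r t * sin (\<rho> t))"
    using g by (simp add: cross_sum)
  then show "(\<Sum>t<n. r 0 * r t * sin (\<rho> t)) = 0" using tot by simp
qed

lemma core_inc:
  fixes f :: "nat \<Rightarrow> real \<times> real" and \<rho> r :: "nat \<Rightarrow> real"
  assumes u: "2 \<le> u" "u < n"
    and f: "\<And>t. t < n \<Longrightarrow> f t = (r t * cos (\<theta> + \<rho> t), r t * sin (\<theta> + \<rho> t))"
    and r: "\<And>t. t < n \<Longrightarrow> r t > 0"
    and \<rho>0: "\<rho> 0 = 0"
    and mono: "\<And>t t'. t < t' \<Longrightarrow> t' < n \<Longrightarrow> \<rho> t < \<rho> t'"
    and bnd: "\<And>t. t < n \<Longrightarrow> \<rho> t < 2 * pi"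
    and tot: "(\<Sum>t<n. f t) = 0"
  shows "cross (f 0) (\<Sum>t<u. f t) > 0"
proof -
  note cg = core_gen[OF u f r \<rho>0 tot]
  let ?g = "\<lambda>t. r 0 * r t * sin (\<rho> t)"
  have r0: "r 0 > 0" using r u by simp
  show ?thesis
  proof (cases "\<rho> (u - 1) < pi")
    case True
    have pos: "?g t > 0" if "t \<in> {1..<u}" for t
    proof -
      have "\<rho> t \<le> \<rho> (u - 1)"
      proof (cases "t = u - 1")
        case False then have "t < u - 1" using that by auto
        moreover have "u - 1 < n" using u by simp
        ultimately show ?thesis using mono[of t "u - 1"] by (simp add: less_imp_le)
      qed simp
      moreover have "\<rho> t > 0" using mono[of 0 t] that u \<rho>0 by auto
      ultimately have "sin (\<rho> t) > 0" using True by (intro sin_gt_zero) auto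
      then show ?thesis using r0 r[of t] that u by simp
    qed
    have "(\<Sum>t<u. ?g t) = ?g 0 + (\<Sum>t\<in>{1..<u}. ?g t)"
      using sum_split_at[of 1 u ?g] u by simp
    moreover have "?g 0 = 0" using \<rho>0 by simp
    moreover have "(\<Sum>t\<in>{1..<u}. ?g t) > 0"
      using pos u by (intro sum_pos) auto
    ultimately show ?thesis using cg(1) by simp
  next
    case False
    have neg: "?g t < 0" if "t \<in> {u..<n}" for t
    proof -
      have "\<rho> t > \<rho> (u - 1)" using mono[of "u - 1" t] that u by auto
      then have "sin (\<rho> t) < 0" using False bnd[of t] that by (intro sin_lt_zero) auto
      then show ?thesis using r0 r[of t] that u by (simp add: mult_pos_neg)
    qed
    have "(\<Sum>t\<in>{u..<n}. ?g t) < 0"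
      using neg u by (intro sum_neg') auto
    then show ?thesis using cg sum_split_at[of u n ?g] u by simp
  qed
qed

lemma core_dec:
  fixes f :: "nat \<Rightarrow> real \<times> real" and \<rho> r :: "nat \<Rightarrow> real"
  assumes u: "2 \<le> u" "u < n"
    and f: "\<And>t. t < n \<Longrightarrow> f t = (r t * cos (\<theta> + \<rho> t), r t * sin (\<theta> + \<rho> t))"
    and r: "\<And>t. t < n \<Longrightarrow> r t > 0"
    and \<rho>0: "\<rho> 0 = 0"
    and mono: "\<And>t t'. t < t' \<Longrightarrow> t' < n \<Longrightarrow> \<rho> t > \<rho> t'"
    and bnd: "\<And>t. t < n \<Longrightarrow> \<rho> t > - 2 * pi"
    and tot: "(\<Sum>t<n. f t) = 0"
  shows "cross (f 0) (\<Sum>t<u. f t) < 0"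
proof -
  note cg = core_gen[OF u f r \<rho>0 tot]
  let ?g = "\<lambda>t. r 0 * r t * sin (\<rho> t)"
  have r0: "r 0 > 0" using r u by simp
  show ?thesis
  proof (cases "\<rho> (u - 1) > - pi")
    case True
    have pos: "?g t < 0" if "t \<in> {1..<u}" for t
    proof -
      have "\<rho> t \<ge> \<rho> (u - 1)"
      proof (cases "t = u - 1")
        case False then have "t < u - 1" using that by auto
        moreover have "u - 1 < n" using u by simp
        ultimately show ?thesis using mono[of t "u - 1"] by (simp add: less_imp_le)
      qed simp
      moreover have "\<rho> t < 0" using mono[of 0 t] that u \<rho>0 by auto
      ultimately have "sin (- \<rho> t) > 0" using True by (intro sin_gt_zero) auto
      then have "sin (\<rho> t) < 0" by simp
      then show ?thesis using r0 r[of t] that u by (simp add: mult_pos_neg)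
    qed
    have "(\<Sum>t<u. ?g t) = ?g 0 + (\<Sum>t\<in>{1..<u}. ?g t)"
      using sum_split_at[of 1 u ?g] u by simp
    moreover have "?g 0 = 0" using \<rho>0 by simp
    moreover have "(\<Sum>t\<in>{1..<u}. ?g t) < 0"
      using pos u by (intro sum_neg') auto
    ultimately show ?thesis using cg(1) by simp
  next
    case False
    have neg: "?g t > 0" if "t \<in> {u..<n}" for t
    proof -
      have "\<rho> t < \<rho> (u - 1)" using mono[of "u - 1" t] that u by auto
      then have "sin (- \<rho> t) < 0" using False bnd[of t] that by (intro sin_lt_zero) auto
      then have "sin (\<rho> t) > 0" by simp
      then show ?thesis using r0 r[of t] that u by simp
    qed
    have "(\<Sum>t\<in>{u..<n}. ?g t) > 0"
      using neg u by (intro sum_pos) auto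
    then show ?thesis using cg sum_split_at[of u n ?g] u by simp
  qed
qed



lemma chain_mono:
  fixes \<beta> :: "nat \<Rightarrow> real"
  assumes st: "\<forall>j. Suc j < n \<longrightarrow> \<beta> j < \<beta> (Suc j)"
  shows "j < j' \<Longrightarrow> j' < n \<Longrightarrow> \<beta> j < \<beta> j'"
proof (induction j')
  case 0 then show ?case by simp
next
  case (Suc j')
  show ?case
  proof (cases "j = j'")
    case True then show ?thesis using st Suc.prems by simp
  next
    case False
    then have "\<beta> j < \<beta> j'" using Suc by simp
    also have "\<beta> j' < \<beta> (Suc j')" using st Suc.prems by simp
    finally show ?thesis .
  qed
qed

lemma edg_telescope: "(\<Sum>t<u. edg n V (q + t)) = vtx n V (q + u) - vtx n V q"
proof -
  have "(\<Sum>t<u. edg n V (q + t)) = (\<Sum>t<u. vtx n V (q + Suc t) - vtx n V (q + t))"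
    by (simp add: edg_def)
  also have "\<dots> = vtx n V (q + u) - vtx n V (q + 0)"
    by (rule sum_lessThan_telescope[of "\<lambda>t. vtx n V (q + t)"])
  finally show ?thesis by simp
qed

lemma idx_shift:
  fixes P q n k t :: nat
  assumes "P = (q + n - k) mod n" "q < n" "k < n"
  shows "(q + t) mod n = (k + (P + t) mod n) mod n"
proof -
  have "(k + (P + t) mod n) mod n = (k + (P + t)) mod n" by (rule mod_add_right_eq)
  also have "\<dots> = ((k + P) + t) mod n" by (simp add: add.assoc)
  also have "\<dots> = ((k + P) mod n + t) mod n" by (simp add: mod_add_left_eq)
  also have "(k + P) mod n = (k + (q + n - k)) mod n" using assms(1) by (simp add: mod_add_right_eq)
  also have "k + (q + n - k) = q + n" using assms by simp
  finally show ?thesis using assms(2) by simp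
qed

lemma vertex_u:
  assumes n0: "0 < n" and j: "j mod n \<noteq> i mod n" "j mod n \<noteq> Suc i mod n"
  shows "\<exists>u. 2 \<le> u \<and> u < n \<and> vtx n V j - vtx n V i = (\<Sum>t<u. edg n V (i mod n + t))"
proof -
  let ?q = "i mod n"
  define u where "u = (j + n - ?q) mod n"
  have qn: "?q < n" using n0 by simp
  have qu: "(?q + u) mod n = j mod n"
  proof -
    have "(?q + u) mod n = (?q + (j + n - ?q)) mod n" unfolding u_def by (simp add: mod_add_right_eq)
    also have "?q + (j + n - ?q) = j + n" using qn by simp
    finally show ?thesis by simp
  qed
  have u0: "u \<noteq> 0"
  proof
    assume "u = 0"
    then have "j mod n = i mod n" using qu by simp
    then show False using j by simp
  qed
  have u1: "u \<noteq> 1"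
  proof
    assume "u = 1"
    then have "j mod n = Suc ?q mod n" using qu by simp
    then show False using j by (simp add: mod_Suc_eq)
  qed
  have "vtx n V j = vtx n V (?q + u)" using qu by (metis vtx_cong)
  then have "vtx n V j - vtx n V i = (\<Sum>t<u. edg n V (?q + t))"
    using edg_telescope[of n V ?q u] by simp
  moreover have "u < n" using n0 unfolding u_def by simp
  ultimately show ?thesis using u0 u1 by (intro exI[of _ u]) auto
qed

lemma total_zero: "0 < n \<Longrightarrow> (\<Sum>t<n. edg n V (q + t)) = 0"
  by (simp only: edg_telescope vtx_add_n diff_self)

lemma lo_edg:
  assumes lo: "locally_ordinary n V" and n0: "0 < n"
  shows "edg n V i \<noteq> 0"
proof -
  have "i mod n < n" using n0 by simp
  then have "vtx n V (i mod n) \<noteq> vtx n V (Suc (i mod n))" using lo unfolding locally_ordinary_def by blast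
  moreover have "vtx n V (Suc (i mod n)) = vtx n V (Suc i)" by (metis mod_Suc_eq vtx_mod)
  ultimately have "vtx n V i \<noteq> vtx n V (Suc i)" by simp
  then show ?thesis by (simp add: edg_def)
qed

lemma mod_split1:
  fixes P t n :: nat
  assumes "P < n" "t < n" "t < n - P"
  shows "(P + t) mod n = P + t"
  using assms by simp

lemma mod_split2:
  fixes P t n :: nat
  assumes "P < n" "t < n" "\<not> t < n - P"
  shows "(P + t) mod n = P + t - n"
proof -
  have "n \<le> P + t" using assms by simp
  then have "(P + t) mod n = (P + t - n) mod n" by (rule le_mod_geq)
  also have "\<dots> = P + t - n" using assms by simp
  finally show ?thesis .
qed

lemma cos2pi' [simp]: "cos (2 * pi + x) = cos x" by (simp add: add.commute)
lemma sin2pi' [simp]: "sin (2 * pi + x) = sin x" by (simp add: add.commute)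

lemma incr_C:
  assumes n: "n \<ge> 3" and I: "c_strictly_increasing n V"
  shows "condC n V 1"
proof -
  have n0: "0 < n" using n by simp
  obtain k where lo: "locally_ordinary n V" and k: "k < n"
    and st: "\<forall>j. Suc j < n \<longrightarrow> poly_arg n V ((k + j) mod n) < poly_arg n V ((k + Suc j) mod n)"
    using I unfolding c_strictly_increasing_def by blast
  define \<beta> where "\<beta> j = poly_arg n V ((k + j) mod n)" for j
  have bm: "\<beta> j < \<beta> j'" if "j < j'" "j' < n" for j j'
    using chain_mono[of n \<beta>] st that unfolding \<beta>_def by simp
  have e0: "edg n V i \<noteq> 0" for i by (rule lo_edg[OF lo n0])
  have bb: "0 \<le> \<beta> j" "\<beta> j < 2 * pi" for j unfolding \<beta>_def using edge_polar(2,3)[OF e0] by auto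
  show ?thesis unfolding condC_def
  proof (intro allI impI)
    fix i j assume j: "j mod n \<noteq> i mod n \<and> j mod n \<noteq> Suc i mod n"
    let ?q = "i mod n"
    define P where "P = (?q + n - k) mod n"
    have Pn: "P < n" unfolding P_def using n0 by simp
    have qn: "?q < n" using n0 by simp
    have ix: "poly_arg n V (?q + t) = \<beta> ((P + t) mod n)" for t
      unfolding \<beta>_def using idx_shift[OF P_def qn k, of t] poly_arg_mod by metis
    define \<rho> where "\<rho> t = poly_arg n V (?q + t) - poly_arg n V ?q + (if t < n - P then 0 else 2 * pi)" for t
    define f where "f t = edg n V (?q + t)" for t
    define r where "r t = norm (f t)" for t
    have \<rho>v: "\<rho> t = (if t < n - P then \<beta> (P + t) - \<beta> P else \<beta> (P + t - n) - \<beta> P + 2 * pi)"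
      if "t < n" for t
      using ix[of t] ix[of 0] mod_split1[OF Pn that] mod_split2[OF Pn that] mod_split1[OF Pn n0] Pn unfolding \<rho>_def by auto
    obtain u where u: "2 \<le> u" "u < n" "vtx n V j - vtx n V i = (\<Sum>t<u. f t)"
      using vertex_u[OF n0, of j i] j unfolding f_def by blast
    have "cross (f 0) (\<Sum>t<u. f t) > 0"
    proof (rule core_inc[OF u(1,2), where r = r and \<theta> = "poly_arg n V ?q" and \<rho> = \<rho>])
      fix t assume t: "t < n"
      have fp: "f t = (r t * cos (poly_arg n V (?q + t)), r t * sin (poly_arg n V (?q + t)))"
        unfolding f_def r_def by (rule edge_polar(1)[OF e0])
      show "f t = (r t * cos (poly_arg n V ?q + \<rho> t), r t * sin (poly_arg n V ?q + \<rho> t))"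
        using fp unfolding \<rho>_def by (cases "t < n - P") (simp_all add: add.commute add.left_commute)
      show "r t > 0" unfolding r_def f_def using e0 by simp
      show "\<rho> t < 2 * pi"
      proof (cases "t < n - P")
        case True then show ?thesis using \<rho>v[OF t] bb[of "P + t"] bb[of P] by simp
      next
        case False
        then have "\<beta> (P + t - n) < \<beta> P" using bm[of "P + t - n" P] t Pn by simp
        then show ?thesis using \<rho>v[OF t] False by simp
      qed
    next
      show "\<rho> 0 = 0" using \<rho>v[OF n0] Pn by simp
    next
      fix t t' assume tt: "t < t'" "t' < n"
      show "\<rho> t < \<rho> t'"
      proof (cases "t' < n - P")
        case True
        then show ?thesis using \<rho>v[of t] \<rho>v[of t'] tt bm[of "P + t" "P + t'"] by auto
      next
        case F: False
        show ?thesis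
        proof (cases "t < n - P")
          case True
          then show ?thesis using \<rho>v[of t] \<rho>v[of t'] tt F bb[of "P + t"] bb[of "P + t' - n"] by auto
        next
          case False
          have "P + t - n < P + t' - n" "P + t' - n < n" using tt F False Pn by arith+
          then show ?thesis using \<rho>v[of t] \<rho>v[of t'] tt F False bm[of "P + t - n" "P + t' - n"] by auto
        qed
      qed
    next
      show "(\<Sum>t<n. f t) = 0" unfolding f_def by (rule total_zero[OF n0])
    qed
    moreover have "f 0 = edg n V i" unfolding f_def by simp
    ultimately show "1 * cross (edg n V i) (vtx n V j - vtx n V i) > 0" using u(3) by simp
  qed
qed

lemma cos_m2pi [simp]: "cos (x - 2 * pi) = cos x" by (metis cos_periodic diff_add_cancel)
lemma sin_m2pi [simp]: "sin (x - 2 * pi) = sin x" by (metis sin_periodic diff_add_cancel)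

lemma decr_C:
  assumes n: "n \<ge> 3" and I: "c_strictly_decreasing n V"
  shows "condC n V (-1)"
proof -
  have n0: "0 < n" using n by simp
  obtain k where lo: "locally_ordinary n V" and k: "k < n"
    and st: "\<forall>j. Suc j < n \<longrightarrow> poly_arg n V ((k + j) mod n) > poly_arg n V ((k + Suc j) mod n)"
    using I unfolding c_strictly_decreasing_def by blast
  define \<beta> where "\<beta> j = poly_arg n V ((k + j) mod n)" for j
  have bm: "\<beta> j > \<beta> j'" if "j < j'" "j' < n" for j j'
    using chain_mono[of n "\<lambda>j. - \<beta> j"] st that unfolding \<beta>_def by simp
  have e0: "edg n V i \<noteq> 0" for i by (rule lo_edg[OF lo n0])
  have bb: "0 \<le> \<beta> j" "\<beta> j < 2 * pi" for j unfolding \<beta>_def using edge_polar(2,3)[OF e0] by auto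
  show ?thesis unfolding condC_def
  proof (intro allI impI)
    fix i j assume j: "j mod n \<noteq> i mod n \<and> j mod n \<noteq> Suc i mod n"
    let ?q = "i mod n"
    define P where "P = (?q + n - k) mod n"
    have Pn: "P < n" unfolding P_def using n0 by simp
    have qn: "?q < n" using n0 by simp
    have ix: "poly_arg n V (?q + t) = \<beta> ((P + t) mod n)" for t
      unfolding \<beta>_def using idx_shift[OF P_def qn k, of t] poly_arg_mod by metis
    define \<rho> where "\<rho> t = poly_arg n V (?q + t) - poly_arg n V ?q - (if t < n - P then 0 else 2 * pi)" for t
    define f where "f t = edg n V (?q + t)" for t
    define r where "r t = norm (f t)" for t
    have \<rho>v: "\<rho> t = (if t < n - P then \<beta> (P + t) - \<beta> P else \<beta> (P + t - n) - \<beta> P - 2 * pi)"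
      if "t < n" for t
      using ix[of t] ix[of 0] mod_split1[OF Pn that] mod_split2[OF Pn that] mod_split1[OF Pn n0] Pn unfolding \<rho>_def by auto
    obtain u where u: "2 \<le> u" "u < n" "vtx n V j - vtx n V i = (\<Sum>t<u. f t)"
      using vertex_u[OF n0, of j i] j unfolding f_def by blast
    have "cross (f 0) (\<Sum>t<u. f t) < 0"
    proof (rule core_dec[OF u(1,2), where r = r and \<theta> = "poly_arg n V ?q" and \<rho> = \<rho>])
      fix t assume t: "t < n"
      have fp: "f t = (r t * cos (poly_arg n V (?q + t)), r t * sin (poly_arg n V (?q + t)))"
        unfolding f_def r_def by (rule edge_polar(1)[OF e0])
      show "f t = (r t * cos (poly_arg n V ?q + \<rho> t), r t * sin (poly_arg n V ?q + \<rho> t))"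
        using fp unfolding \<rho>_def by (cases "t < n - P") (simp_all add: add.commute add.left_commute)
      show "r t > 0" unfolding r_def f_def using e0 by simp
      show "\<rho> t > - 2 * pi"
      proof (cases "t < n - P")
        case True then show ?thesis using \<rho>v[OF t] bb[of "P + t"] bb[of P] by simp
      next
        case False
        then have "\<beta> (P + t - n) > \<beta> P" using bm[of "P + t - n" P] t Pn by simp
        then show ?thesis using \<rho>v[OF t] False by simp
      qed
    next
      show "\<rho> 0 = 0" using \<rho>v[OF n0] Pn by simp
    next
      fix t t' assume tt: "t < t'" "t' < n"
      show "\<rho> t > \<rho> t'"
      proof (cases "t' < n - P")
        case True
        then show ?thesis using \<rho>v[of t] \<rho>v[of t'] tt bm[of "P + t" "P + t'"] by auto
      next
        case F: False
        show ?thesis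
        proof (cases "t < n - P")
          case True
          then show ?thesis using \<rho>v[of t] \<rho>v[of t'] tt F bb[of "P + t"] bb[of "P + t' - n"] by auto
        next
          case False
          have "P + t - n < P + t' - n" "P + t' - n < n" using tt F False Pn by arith+
          then show ?thesis using \<rho>v[of t] \<rho>v[of t'] tt F False bm[of "P + t - n" "P + t' - n"] by auto
        qed
      qed
    next
      show "(\<Sum>t<n. f t) = 0" unfolding f_def by (rule total_zero[OF n0])
    qed
    moreover have "f 0 = edg n V i" unfolding f_def by simp
    ultimately show "-1 * cross (edg n V i) (vtx n V j - vtx n V i) > 0" using u(3) by simp
  qed
qed



theorem theorem1p12:
  fixes n :: nat and V :: "nat \<Rightarrow> real \<times> real"
  assumes "n \<ge> 3"
  shows "strictly_convex_poly n V \<longleftrightarrow> c_strictly_monotone n V"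
proof
  assume S: "strictly_convex_poly n V"
  obtain s where C: "condC n V s" using scp_C[OF S assms] by blast
  have "s \<noteq> 0" using C_turn[OF C assms, of 0] by auto
  then have "s > 0 \<or> s < 0" by linarith
  then show "c_strictly_monotone n V"
    using C_incr[OF C assms] C_decr[OF C assms] unfolding c_strictly_monotone_def by blast
next
  assume M: "c_strictly_monotone n V"
  then show "strictly_convex_poly n V"
    unfolding c_strictly_monotone_def
    using incr_C[OF assms] decr_C[OF assms] C_scp[OF _ assms] by blast
qed

end
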